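(* Let $p,q\ge1$ be relatively prime integers, $p=p_1^2+p_2^2+p_3^2+p_4^2$ with integers $p_j\ge 0$, and let $a,b,\gamma$ be integers such that $\Delta=r_1r_4-r_2r_3$ is relatively prime to $q$, where $r_1=-p_1-2\gamma p_3+bp_4$, $r_2=p_2+2ap_4-bp_3$, $r_3=p_3-2\gamma p_1+bp_2$, $r_4=-p_4+2ap_2-bp_1$. Let $\varphi(n,m)=e\big(\tfrac1q(an^2+bnm+\gamma m^2)\big)$. For integers $k,\ell$ set $M=p_2k+p_4\ell$, $N=-p_1k-p_3\ell$, $M'=-p_4k+p_2\ell$, $N'=p_3k-p_1\ell$, and $$S(k,\ell)=\sum_{n,m=0}^{q-1} e\Big(\tfrac{nM'+mN'}{q}\Big)\,\overline{\varphi(n,m)}\,\varphi(n+M,m+N).$$ Then $S(k,\ell)=q^2$ if $q\mid k$ and $q\mid \ell$, and $S(k,\ell)=0$ otherwise.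
   Context: $e(t):=e^{2\pi i t}$. *)

theory Defs
  imports "HOL-Analysis.Analysis"
begin

definition e :: "real \<Rightarrow> complex" where
  "e t = exp (2 * of_real pi * \<i> * of_real t)"

end

theory Submission
  imports Defs
begin
lemma e_add: "e (x+y) = e x * e y"
  unfolding e_def by (simp add: exp_add[symmetric] algebra_simps)
lemma e_int: "e (of_int n) = 1"
  unfolding e_def by (simp add: exp_eq_1)
lemma e_eq_1: "e x = 1 \<longleftrightarrow> x \<in> \<int>"
proof -
  have "e x = 1 \<longleftrightarrow> (\<exists>n::int. 2*pi*x = of_int (2*n) * pi)"
    unfolding e_def by (simp add: exp_eq_1)
  also have "\<dots> \<longleftrightarrow> x \<in> \<int>" by (auto elim!: Ints_cases simp: mult.commute)
  finally show ?thesis .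
qed
lemma e_pow: "e (of_nat n * x) = e x ^ n"
  unfolding e_def by (simp add: exp_of_nat_mult[symmetric] algebra_simps)
lemma cnj_e: "cnj (e x) = e (-x)"
  unfolding e_def by (simp add: exp_cnj)
lemma div_Ints: "(q::int) \<ge> 1 \<Longrightarrow> (real_of_int A / of_int q \<in> \<int>) \<longleftrightarrow> q dvd A"
proof
  assume q: "q \<ge> 1" and "real_of_int A / of_int q \<in> \<int>"
  then obtain j where "real_of_int A / of_int q = of_int j" by (auto elim: Ints_cases)
  then have "real_of_int A = of_int (q*j)" using q by (simp add: field_simps)
  then have "A = q*j" by linarith
  then show "q dvd A" by simp
next
  assume q: "q \<ge> 1" and "q dvd A"
  then obtain j where "A = q*j" by auto
  then show "real_of_int A / of_int q \<in> \<int>" using q by simp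
qed
lemma geo: assumes q: "(q::int) \<ge> 1"
  shows "(\<Sum>n\<in>{0..q-1}. e (of_int (n*A) / of_int q)) = (if q dvd A then of_int q else 0)"
proof -
  define z where "z = e (of_int A / of_int q)"
  have S: "{0..q-1} = int ` {..<nat q}" using q
    by (auto simp: image_iff intro!: bexI[of _ "nat x" for x])
  have "(\<Sum>n\<in>{0..q-1}. e (of_int (n*A) / of_int q)) = (\<Sum>i<nat q. e (of_int (int i*A) / of_int q))"
    unfolding S by (simp add: sum.reindex)
  also have "\<dots> = (\<Sum>i<nat q. z^i)"
    unfolding z_def by (intro sum.cong refl) (simp add: e_pow[symmetric])
  also have "\<dots> = (if q dvd A then of_int q else 0)"
  proof -
    have zq: "z ^ nat q = 1" unfolding z_def e_pow[symmetric] using q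
      by (simp add: e_int)
    have z1: "z = 1 \<longleftrightarrow> q dvd A" unfolding z_def e_eq_1 using div_Ints[OF q] .
    show ?thesis using q by (simp add: sum_gp_strict zq z1)
  qed
  finally show ?thesis .
qed

theorem mainTheorem6:
  fixes p q p1 p2 p3 p4 a b \<gamma> k l :: int
    and \<phi> :: "int \<Rightarrow> int \<Rightarrow> complex"
  assumes "p \<ge> 1" and "q \<ge> 1" and "coprime p q"
    and "p = p1^2 + p2^2 + p3^2 + p4^2"
    and "p1 \<ge> 0" and "p2 \<ge> 0" and "p3 \<ge> 0" and "p4 \<ge> 0"
    and "coprime ((- p1 - 2*\<gamma>*p3 + b*p4) * (- p4 + 2*a*p2 - b*p1)
                  - (p2 + 2*a*p4 - b*p3) * (p3 - 2*\<gamma>*p1 + b*p2)) q"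
    and "\<phi> = (\<lambda>n m. e ((a*n^2 + b*n*m + \<gamma>*m^2) / q))"
  shows "(\<Sum>n\<in>{0..q-1}. \<Sum>m\<in>{0..q-1}.
            e (((n * (- p4*k + p2*l)) + m * (p3*k - p1*l)) / q)
            * cnj (\<phi> n m) * \<phi> (n + (p2*k + p4*l)) (m + (- p1*k - p3*l)))
         = (if q dvd k \<and> q dvd l then of_int (q^2) else 0)"
proof -
  have q: "q \<ge> 1" by fact
  define M where "M = p2*k + p4*l"
  define N where "N = - p1*k - p3*l"
  define r1 where "r1 = - p1 - 2*\<gamma>*p3 + b*p4"
  define r2 where "r2 = p2 + 2*a*p4 - b*p3"
  define r3 where "r3 = p3 - 2*\<gamma>*p1 + b*p2"
  define r4 where "r4 = - p4 + 2*a*p2 - b*p1"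
  define A where "A = k*r4 + l*r2"
  define B where "B = k*r3 + l*r1"
  define C where "C = a*M^2 + b*M*N + \<gamma>*N^2"
  have cop: "coprime (r1*r4 - r2*r3) q" using assms(9) unfolding r1_def r2_def r3_def r4_def .
  have summand: "e (((n * (- p4*k + p2*l)) + m * (p3*k - p1*l)) / q)
            * cnj (\<phi> n m) * \<phi> (n + (p2*k + p4*l)) (m + (- p1*k - p3*l))
        = e (of_int C / of_int q) * (e (of_int (n*A) / of_int q) * e (of_int (m*B) / of_int q))"
    for n m
  proof -
    have "e (((n * (- p4*k + p2*l)) + m * (p3*k - p1*l)) / q)
            * cnj (\<phi> n m) * \<phi> (n + (p2*k + p4*l)) (m + (- p1*k - p3*l))
        = e (of_int ((n * (- p4*k + p2*l)) + m * (p3*k - p1*l)) / q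
             + - (of_int (a*n^2 + b*n*m + \<gamma>*m^2) / q)
             + of_int (a*(n + (p2*k + p4*l))^2 + b*(n + (p2*k + p4*l))*(m + (- p1*k - p3*l)) + \<gamma>*(m + (- p1*k - p3*l))^2) / q)"
      unfolding assms(10) e_add cnj_e by simp
    also have "\<dots> = e (of_int (C + n*A + m*B) / of_int q)"
    proof -
      have "(n * (- p4*k + p2*l)) + m * (p3*k - p1*l) - (a*n^2 + b*n*m + \<gamma>*m^2)
          + (a*(n + (p2*k + p4*l))^2 + b*(n + (p2*k + p4*l))*(m + (- p1*k - p3*l)) + \<gamma>*(m + (- p1*k - p3*l))^2)
          = C + n*A + m*B"
        unfolding C_def A_def B_def M_def N_def r1_def r2_def r3_def r4_def by algebra
      then show ?thesis by (simp add: add_divide_distrib[symmetric] diff_divide_distrib[symmetric]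
           flip: of_int_add of_int_diff)
    qed
    also have "\<dots> = e (of_int C / of_int q) * (e (of_int (n*A) / of_int q) * e (of_int (m*B) / of_int q))"
      by (simp add: add_divide_distrib e_add)
    finally show ?thesis .
  qed
  have "(\<Sum>n\<in>{0..q-1}. \<Sum>m\<in>{0..q-1}.
            e (((n * (- p4*k + p2*l)) + m * (p3*k - p1*l)) / q)
            * cnj (\<phi> n m) * \<phi> (n + (p2*k + p4*l)) (m + (- p1*k - p3*l)))
     = e (of_int C / of_int q) * ((\<Sum>n\<in>{0..q-1}. e (of_int (n*A) / of_int q))
          * (\<Sum>m\<in>{0..q-1}. e (of_int (m*B) / of_int q)))"
    unfolding summand sum_distrib_left[symmetric] sum_product by simp
  also have "\<dots> = e (of_int C / of_int q) * ((if q dvd A then of_int q else 0) * (if q dvd B then of_int q else 0))"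
    unfolding geo[OF q] ..
  also have "\<dots> = (if q dvd k \<and> q dvd l then of_int (q^2) else 0)"
  proof (cases "q dvd k \<and> q dvd l")
    case True
    then obtain k' l' where kl: "k = q*k'" "l = q*l'" by (auto elim!: dvdE)
    have AB: "q dvd A" "q dvd B" unfolding A_def B_def kl by auto
    have "q dvd M" "q dvd N" unfolding M_def N_def kl by auto
    then have "q dvd C" unfolding C_def by (auto simp: power2_eq_square)
    then have "e (of_int C / of_int q) = 1" using div_Ints[OF q] e_eq_1 by blast
    then show ?thesis using True AB by (simp add: power2_eq_square)
  next
    case False
    have "\<not> (q dvd A \<and> q dvd B)"
    proof
      assume h: "q dvd A \<and> q dvd B"
      have "q dvd r1*A - r2*B" using h by auto
      moreover have "r1*A - r2*B = k*(r1*r4 - r2*r3)" unfolding A_def B_def by algebra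
      ultimately have "q dvd k*(r1*r4 - r2*r3)" by simp
      then have k: "q dvd k" using cop
        by (metis coprime_commute coprime_dvd_mult_left_iff)
      have "q dvd r4*B - r3*A" using h by auto
      moreover have "r4*B - r3*A = l*(r1*r4 - r2*r3)" unfolding A_def B_def by algebra
      ultimately have "q dvd l*(r1*r4 - r2*r3)" by simp
      then have "q dvd l" using cop
        by (metis coprime_commute coprime_dvd_mult_left_iff)
      then show False using k False by simp
    qed
    then show ?thesis using False by auto
  qed
  finally show ?thesis .
qed

end
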